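(* Let $X$ be a random vector in $\mathbb{R}^n$, let $T=g(X)$ for a deterministic function $g:\mathbb{R}^n\to\mathcal T$, let $f_{\boldsymbol\eta}:\mathbb{R}^n\to\mathbb{R}^m$ be a deterministic function with parameter $\boldsymbol\eta\in\mathbb{R}^d$, let $t>0$, let $Z_t\sim\mathcal N(\mathbf 0,t\mathbf I_m)$ be independent of $X$, and set $Y_t=f_{\boldsymbol\eta}(X)+Z_t$. For $\beta\ge 0$ define the information bottleneck objective $\mathcal L_{\mathrm{IB}}(\boldsymbol\eta)=I(T;Y_t)-\beta I(X;Y_t)$. Let $s_{Y_t}(\mathbf y)=\nabla_{\mathbf y}\log p_{Y_t}(\mathbf y)$ be the unconditional score and $s_{Y_t|T}(\mathbf y|\tau)=\nabla_{\mathbf y}\log p_{Y_t|T}(\mathbf y|\tau)$ the conditional score. Under standard regularity conditions ($f_{\boldsymbol\eta}$ differentiable in $\boldsymbol\eta$, and exchange of differentiation in $\boldsymbol\eta$ with expectation/integration permitted), $$\nabla_{\boldsymbol\eta}\mathcal L_{\mathrm{IB}}(\boldsymbol\eta)=\mathbb{E}_{X,Z_t}\!\left[Df_{\boldsymbol\eta}(X)^\top\big(s_{Y_t|T}(Y_t|T)+(\beta-1)\,s_{Y_t}(Y_t)\big)\right],$$ where $Df_{\boldsymbol\eta}(\mathbf x)\in\mathbb{R}^{m\times d}$ is the Jacobian of $\boldsymbol\eta\mapsto f_{\boldsymbol\eta}(\mathbf x)$.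
   Context: $I(\cdot;\cdot)$ denotes mutual information. The densities $p_{Y_t}$ and $p_{Y_t|T}$ depend on $\boldsymbol\eta$ through $f_{\boldsymbol\eta}$. *)

theory Defs
  imports "HOL-Analysis.Analysis" "HOL-Probability.Probability"
begin

definition iso_gauss_density :: "real \<Rightarrow> real^'m \<Rightarrow> real" where
  "iso_gauss_density t z = (\<Prod>i\<in>UNIV. normal_density 0 (sqrt t) (z $ i))"

definition grad :: "(real^'m \<Rightarrow> real) \<Rightarrow> real^'m \<Rightarrow> real^'m" where
  "grad F y = (\<chi> i. frechet_derivative F (at y) (axis i 1))"

definition score :: "(real^'m \<Rightarrow> real) \<Rightarrow> real^'m \<Rightarrow> real^'m" where
  "score p y = grad (\<lambda>y'. ln (p y')) y"

end

theory Submission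
  imports Defs
begin


lemma grad_inner:
  fixes F :: "real^'m \<Rightarrow> real"
  assumes "F differentiable (at y)"
  shows "grad F y \<bullet> k = frechet_derivative F (at y) k"
proof -
  have lin: "linear (frechet_derivative F (at y))"
    using assms frechet_derivative_works has_derivative_linear by blast
  have kk: "k = (\<Sum>i\<in>UNIV. (k $ i) *\<^sub>R axis i 1)"
    by (simp add: vec_eq_iff axis_def sum.delta' if_distrib cong: if_cong)
  have "frechet_derivative F (at y) k = frechet_derivative F (at y) (\<Sum>i\<in>UNIV. (k $ i) *\<^sub>R axis i 1)"
    using kk by metis
  also have "\<dots> = (\<Sum>i\<in>UNIV. k $ i * frechet_derivative F (at y) (axis i 1))"
    by (simp add: linear_sum[OF lin] linear_cmul[OF lin])
  finally have "frechet_derivative F (at y) k = (\<Sum>i\<in>UNIV. k $ i * frechet_derivative F (at y) (axis i 1))" .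
  then show ?thesis
    by (simp add: grad_def inner_vec_def mult.commute)
qed

lemma transpose_inner:
  fixes A :: "real^'d^'m"
  shows "(transpose A *v s) \<bullet> h = s \<bullet> (A *v h)"
  by (metis dot_lmul_matrix transpose_transpose vector_transpose_matrix)

lemma jac_apply:
  fixes G :: "real^'d \<Rightarrow> real^'m"
  assumes "G differentiable (at x)"
  shows "jacobian G (at x) *v h = frechet_derivative G (at x) h"
proof -
  have "linear (frechet_derivative G (at x))"
    using assms frechet_derivative_works has_derivative_linear by blast
  then show ?thesis unfolding jacobian_def
    by (simp add: matrix_works)
qed


lemma chain_ln:
  fixes Q :: "real^'d \<Rightarrow> real^'m \<Rightarrow> real" and G :: "real^'d \<Rightarrow> real^'m"
  assumes QD: "(\<lambda>(\<theta>,y). Q \<theta> y) differentiable (at (\<eta>, G \<eta> + c))"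
    and pos: "Q \<eta> (G \<eta> + c) > 0" and GD: "G differentiable (at \<eta>)"
  shows "frechet_derivative (\<lambda>\<theta>. ln (Q \<theta> (G \<theta> + c))) (at \<eta>) h =
      frechet_derivative (\<lambda>\<theta>. Q \<theta> (G \<eta> + c)) (at \<eta>) h / Q \<eta> (G \<eta> + c)
      + frechet_derivative (\<lambda>y. ln (Q \<eta> y)) (at (G \<eta> + c)) (frechet_derivative G (at \<eta>) h)"
    and "(\<lambda>y. ln (Q \<eta> y)) differentiable (at (G \<eta> + c))"
proof -
  define y0 where "y0 = G \<eta> + c"
  have eqQ: "(\<lambda>(\<theta>,y). Q \<theta> y) = (\<lambda>p. Q (fst p) (snd p))" by (simp add: split_beta')
  obtain D where D: "((\<lambda>p. Q (fst p) (snd p)) has_derivative D) (at (\<eta>, y0))"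
    using QD unfolding eqQ y0_def differentiable_def by blast
  have linD: "linear D" using D has_derivative_linear by blast
  obtain G' where G': "(G has_derivative G') (at \<eta>)" using GD differentiable_def by blast
  have h1: "((\<lambda>\<theta>. Q \<theta> y0) has_derivative (\<lambda>h. D (h,0))) (at \<eta>)"
  proof -
    have "((\<lambda>\<theta>. (\<theta>, y0)) has_derivative (\<lambda>h. (h, 0))) (at \<eta>)"
      by (auto intro!: derivative_eq_intros)
    from has_derivative_compose[OF this, of "\<lambda>p. Q (fst p) (snd p)" D] D
    show ?thesis by simp
  qed
  have h2: "((\<lambda>y. Q \<eta> y) has_derivative (\<lambda>k. D (0,k))) (at y0)"
  proof -
    have "((\<lambda>y. (\<eta>, y)) has_derivative (\<lambda>k. (0, k))) (at y0)"
      by (auto intro!: derivative_eq_intros)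
    from has_derivative_compose[OF this, of "\<lambda>p. Q (fst p) (snd p)" D] D
    show ?thesis by simp
  qed
  have h3: "((\<lambda>\<theta>. Q \<theta> (G \<theta> + c)) has_derivative (\<lambda>h. D (h, G' h))) (at \<eta>)"
  proof -
    have "((\<lambda>\<theta>. (\<theta>, G \<theta> + c)) has_derivative (\<lambda>h. (h, G' h))) (at \<eta>)"
      using G' by (auto intro!: derivative_eq_intros)
    from has_derivative_compose[OF this, of "\<lambda>p. Q (fst p) (snd p)" D] D
    show ?thesis by (simp add: y0_def)
  qed
  have posy: "Q \<eta> y0 > 0" using pos y0_def by simp
  have l3: "((\<lambda>\<theta>. ln (Q \<theta> (G \<theta> + c))) has_derivative (\<lambda>h. D (h, G' h) / Q \<eta> y0)) (at \<eta>)"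
    using h3 posy unfolding y0_def by (auto intro!: derivative_eq_intros simp: field_simps)
  have l2: "((\<lambda>y. ln (Q \<eta> y)) has_derivative (\<lambda>k. D (0,k) / Q \<eta> y0)) (at y0)"
    using h2 posy by (auto intro!: derivative_eq_intros simp: field_simps)
  show "(\<lambda>y. ln (Q \<eta> y)) differentiable (at (G \<eta> + c))"
    using l2 y0_def differentiable_def by blast
  have "D (h, G' h) = D (h, 0) + D (0, G' h)"
    using linear_add[OF linD, of "(h,0)" "(0, G' h)"] by simp
  then show "frechet_derivative (\<lambda>\<theta>. ln (Q \<theta> (G \<theta> + c))) (at \<eta>) h =
      frechet_derivative (\<lambda>\<theta>. Q \<theta> (G \<eta> + c)) (at \<eta>) h / Q \<eta> (G \<eta> + c)
      + frechet_derivative (\<lambda>y. ln (Q \<eta> y)) (at (G \<eta> + c)) (frechet_derivative G (at \<eta>) h)"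
    using frechet_derivative_at[OF l3] frechet_derivative_at[OF l2] frechet_derivative_at[OF h1]
      frechet_derivative_at[OF G']
    unfolding y0_def[symmetric] by (metis add_divide_distrib)
qed


lemma score_zero:
  fixes P :: "real^'d \<Rightarrow> 'c \<Rightarrow> real" and N :: "'c measure" and W :: "real^'d \<Rightarrow> 'a \<Rightarrow> 'c"
  assumes M: "prob_space M"
    and dist: "\<And>\<theta>. distributed M N (W \<theta>) (\<lambda>y. ennreal (P \<theta> y))"
    and pos: "\<And>\<theta> y. P \<theta> y > 0"
    and dint: "integrable N (\<lambda>y. frechet_derivative (\<lambda>\<theta>. P \<theta> y) (at \<eta>) h)"
    and exch: "((\<lambda>\<theta>. \<integral>y. P \<theta> y \<partial>N) has_derivative
                 (\<lambda>h. \<integral>y. frechet_derivative (\<lambda>\<theta>. P \<theta> y) (at \<eta>) h \<partial>N)) (at \<eta>)"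
  shows "integrable M (\<lambda>\<omega>. frechet_derivative (\<lambda>\<theta>. P \<theta> (W \<eta> \<omega>)) (at \<eta>) h / P \<eta> (W \<eta> \<omega>))"
    and "(\<integral>\<omega>. frechet_derivative (\<lambda>\<theta>. P \<theta> (W \<eta> \<omega>)) (at \<eta>) h / P \<eta> (W \<eta> \<omega>) \<partial>M) = 0"
proof -
  interpret prob_space M by fact
  have one: "(\<integral>y. P \<theta> y \<partial>N) = 1" for \<theta>
  proof -
    have pm: "P \<theta> \<in> borel_measurable N"
      using distributed_real_measurable[OF _ dist[of \<theta>]] pos by (simp add: less_imp_le)
    have "(\<integral>y. P \<theta> y * 1 \<partial>N) = (\<integral>\<omega>. 1 \<partial>M)"
      using pos by (intro distributed_integral[OF dist[of \<theta>]]) (auto simp: less_imp_le)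
    then show ?thesis by (simp add: prob_space)
  qed
  have "((\<lambda>\<theta>. \<integral>y. P \<theta> y \<partial>N) has_derivative (\<lambda>h. 0)) (at \<eta>)"
    unfolding one by (rule has_derivative_const)
  then have z: "(\<lambda>h. \<integral>y. frechet_derivative (\<lambda>\<theta>. P \<theta> y) (at \<eta>) h \<partial>N) = (\<lambda>h. 0)"
    using exch has_derivative_unique by blast
  define g where "g y = frechet_derivative (\<lambda>\<theta>. P \<theta> y) (at \<eta>) h / P \<eta> y" for y
  have pm: "P \<eta> \<in> borel_measurable N"
    using distributed_real_measurable[OF _ dist[of \<eta>]] pos by (simp add: less_imp_le)
  have gm: "g \<in> borel_measurable N"
    unfolding g_def using borel_measurable_integrable[OF dint] pm by measurable
  have eq: "(\<lambda>y. P \<eta> y * g y) = (\<lambda>y. frechet_derivative (\<lambda>\<theta>. P \<theta> y) (at \<eta>) h)"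
    using pos by (auto simp: g_def intro!: ext) (metis less_irrefl)
  show "integrable M (\<lambda>\<omega>. frechet_derivative (\<lambda>\<theta>. P \<theta> (W \<eta> \<omega>)) (at \<eta>) h / P \<eta> (W \<eta> \<omega>))"
  proof -
    have "integrable N (\<lambda>y. P \<eta> y * g y)" unfolding eq by (rule dint)
    then have "integrable M (\<lambda>\<omega>. g (W \<eta> \<omega>))"
      using distributed_integrable[OF dist[of \<eta>] gm] pos by (simp add: less_imp_le)
    then show ?thesis unfolding g_def .
  qed
  have "(\<integral>\<omega>. g (W \<eta> \<omega>) \<partial>M) = (\<integral>y. P \<eta> y * g y \<partial>N)"
    using pos by (intro distributed_integral[OF dist[of \<eta>] gm, symmetric]) (auto simp: less_imp_le)
  also have "\<dots> = 0" unfolding eq using fun_cong[OF z, of h] by simp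
  finally show "(\<integral>\<omega>. frechet_derivative (\<lambda>\<theta>. P \<theta> (W \<eta> \<omega>)) (at \<eta>) h / P \<eta> (W \<eta> \<omega>) \<partial>M) = 0"
    unfolding g_def .
qed


lemma MI_eq:
  fixes M :: "'a measure" and A :: "'a \<Rightarrow> 'b" and SA :: "'b measure" and Y :: "'a \<Rightarrow> real^'m"
    and p :: "real^'m \<Rightarrow> real" and r :: "'b \<Rightarrow> real^'m \<Rightarrow> real"
  assumes M: "prob_space M"
   and A[measurable]: "A \<in> measurable M SA"
   and pd: "distributed M lborel Y (\<lambda>y. ennreal (p y))" and ppos: "\<And>y. p y > 0"
   and rd: "distributed M (distr M SA A \<Otimes>\<^sub>M lborel) (\<lambda>\<omega>. (A \<omega>, Y \<omega>)) (\<lambda>(a,y). ennreal (r a y))"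
   and rpos: "\<And>a y. r a y > 0"
   and ir: "integrable M (\<lambda>\<omega>. ln (r (A \<omega>) (Y \<omega>)))" and ip: "integrable M (\<lambda>\<omega>. ln (p (Y \<omega>)))"
  shows "prob_space.mutual_information M (exp 1) SA borel A Y =
     (\<integral>\<omega>. ln (r (A \<omega>) (Y \<omega>)) \<partial>M) - (\<integral>\<omega>. ln (p (Y \<omega>)) \<partial>M)"
proof -
  interpret prob_space M by fact
  define N where "N = distr M SA A \<Otimes>\<^sub>M (lborel :: (real^'m) measure)"
  interpret PA: prob_space "distr M SA A" by (rule prob_space_distr) simp
  interpret PN: pair_sigma_finite "distr M SA A" lborel ..
  have sfN: "sigma_finite_measure N" unfolding N_def ..
  have rd': "distributed M N (\<lambda>\<omega>. (A \<omega>, Y \<omega>)) (\<lambda>x. ennreal (r (fst x) (snd x)))"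
    using rd unfolding N_def by (simp add: split_beta')
  have Ym[measurable]: "Y \<in> borel_measurable M"
    using distributed_measurable[OF pd] by simp
  have pm[measurable]: "p \<in> borel_measurable borel"
    using distributed_real_measurable[OF _ pd] ppos by (simp add: less_imp_le)
  have rm[measurable]: "(\<lambda>x. r (fst x) (snd x)) \<in> borel_measurable N"
    using distributed_real_measurable[OF _ rd'] rpos by (simp add: less_imp_le)
  have pm2[measurable]: "(\<lambda>x. p (snd x)) \<in> borel_measurable N"
    unfolding N_def by measurable
  have e1: "distr M borel Y = density lborel p"
  proof -
    have "distr M borel Y = distr M lborel Y" by (rule distr_cong) auto
    also have "\<dots> = density lborel p" using distributed_distr_eq_density[OF pd] .
    finally show ?thesis .
  qed
  have e2: "distr M (SA \<Otimes>\<^sub>M borel) (\<lambda>\<omega>. (A \<omega>, Y \<omega>)) = density N (\<lambda>x. r (fst x) (snd x))"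
  proof -
    have "distr M (SA \<Otimes>\<^sub>M borel) (\<lambda>\<omega>. (A \<omega>, Y \<omega>)) = distr M N (\<lambda>\<omega>. (A \<omega>, Y \<omega>))"
      by (rule distr_cong) (auto simp: N_def intro!: sets_pair_measure_cong)
    also have "\<dots> = density N (\<lambda>x. r (fst x) (snd x))" using distributed_distr_eq_density[OF rd'] .
    finally show ?thesis .
  qed
  have sfp: "sigma_finite_measure (density lborel p)"
  proof -
    have "prob_space (distr M lborel Y)" by (rule prob_space_distr) simp
    then show ?thesis using distributed_distr_eq_density[OF pd]
      by (simp add: prob_space_imp_sigma_finite)
  qed
  have e3: "distr M SA A \<Otimes>\<^sub>M distr M borel Y = density N (\<lambda>x. p (snd x))"
  proof -
    have "distr M SA A \<Otimes>\<^sub>M distr M borel Y = density (distr M SA A) (\<lambda>_. 1) \<Otimes>\<^sub>M density lborel p"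
      by (simp add: e1 density_1)
    also have "\<dots> = density N (\<lambda>(x,y). 1 * ennreal (p y))"
      unfolding N_def by (rule pair_measure_density) (auto simp: sfp lborel.sigma_finite_measure_axioms)
    also have "\<dots> = density N (\<lambda>x. p (snd x))"
      by (simp add: split_beta')
    finally show ?thesis .
  qed
  have "mutual_information (exp 1) SA borel A Y =
     KL_divergence (exp 1) (density N (\<lambda>x. p (snd x))) (density N (\<lambda>x. r (fst x) (snd x)))"
    unfolding mutual_information_def e2 e3 ..
  also have "\<dots> = (\<integral>x. r (fst x) (snd x) * log (exp 1) (r (fst x) (snd x) / p (snd x)) \<partial>N)"
  proof (rule sigma_finite_measure.KL_density_density[OF sfN])
    show "AE x in N. p (snd x) = 0 \<longrightarrow> r (fst x) (snd x) = 0"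
      using ppos by (intro AE_I2) (metis less_irrefl)
  qed (use rm in \<open>auto simp: less_imp_le ppos rpos N_def\<close>)
  also have "\<dots> = (\<integral>\<omega>. log (exp 1) (r (A \<omega>) (Y \<omega>) / p (Y \<omega>)) \<partial>M)"
    by (rule distributed_integral[OF rd', where g = "\<lambda>x. log (exp 1) (r (fst x) (snd x) / p (snd x))", simplified])
       (auto simp: less_imp_le rpos)
  also have "\<dots> = (\<integral>\<omega>. ln (r (A \<omega>) (Y \<omega>)) - ln (p (Y \<omega>)) \<partial>M)"
  proof (rule Bochner_Integration.integral_cong[OF refl])
    fix \<omega> show "log (exp 1) (r (A \<omega>) (Y \<omega>) / p (Y \<omega>)) = ln (r (A \<omega>) (Y \<omega>)) - ln (p (Y \<omega>))"
      using ppos[of "Y \<omega>"] rpos[of "A \<omega>" "Y \<omega>"] by (simp add: log_def ln_div)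
  qed
  also have "\<dots> = (\<integral>\<omega>. ln (r (A \<omega>) (Y \<omega>)) \<partial>M) - (\<integral>\<omega>. ln (p (Y \<omega>)) \<partial>M)"
    by (rule Bochner_Integration.integral_diff[OF ir ip])
  finally show ?thesis .
qed


lemma joint_XY:
  fixes M :: "'a measure" and X :: "'a \<Rightarrow> real^'n" and Z :: "'a \<Rightarrow> real^'m"
    and F :: "real^'n \<Rightarrow> real^'m" and \<phi> :: "real^'m \<Rightarrow> real"
  assumes M: "prob_space M"
    and X_rv[measurable]: "X \<in> borel_measurable M"
    and Zd: "distributed M lborel Z (\<lambda>z. ennreal (\<phi> z))"
    and phinn: "\<And>z. \<phi> z \<ge> 0"
    and XZ_indep: "distr M (borel \<Otimes>\<^sub>M borel) (\<lambda>\<omega>. (X \<omega>, Z \<omega>)) = distr M borel X \<Otimes>\<^sub>M distr M borel Z"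
    and F[measurable]: "F \<in> borel_measurable borel"
  shows "distributed M (distr M borel X \<Otimes>\<^sub>M lborel) (\<lambda>\<omega>. (X \<omega>, F (X \<omega>) + Z \<omega>))
           (\<lambda>(x,y). ennreal (\<phi> (y - F x)))"
proof -
  interpret prob_space M by fact
  define PX where "PX = distr M borel X"
  define N where "N = PX \<Otimes>\<^sub>M (lborel :: (real^'m) measure)"
  interpret PX: prob_space PX unfolding PX_def by (rule prob_space_distr) simp
  have Zm[measurable]: "Z \<in> borel_measurable M"
    using distributed_measurable[OF Zd] by simp
  have phim[measurable]: "\<phi> \<in> borel_measurable borel"
    using distributed_real_measurable[OF _ Zd] phinn by simp
  have PZ: "distr M borel Z = density lborel \<phi>"
  proof -
    have "distr M borel Z = distr M lborel Z" by (rule distr_cong) auto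
    also have "\<dots> = density lborel \<phi>" using distributed_distr_eq_density[OF Zd] .
    finally show ?thesis .
  qed
  interpret PZ: prob_space "density lborel \<phi>"
    unfolding PZ[symmetric] by (rule prob_space_distr) simp
  have sN: "sets N = sets (borel \<Otimes>\<^sub>M borel)"
    unfolding N_def PX_def by (intro sets_pair_measure_cong) auto
  define G where "G = (\<lambda>(x::real^'n, z::real^'m). (x, F x + z))"
  have Gm[measurable]: "G \<in> measurable (borel \<Otimes>\<^sub>M borel) (borel \<Otimes>\<^sub>M borel)"
    unfolding G_def by measurable
  have Gm2: "G \<in> measurable (PX \<Otimes>\<^sub>M density lborel \<phi>) N"
    using Gm by (simp cong: measurable_cong_sets add: sN PX_def)
  have eq1: "distr M N (\<lambda>\<omega>. (X \<omega>, F (X \<omega>) + Z \<omega>)) = distr (PX \<Otimes>\<^sub>M density lborel \<phi>) N G"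
  proof -
    have "distr M N (\<lambda>\<omega>. (X \<omega>, F (X \<omega>) + Z \<omega>)) = distr M N (G \<circ> (\<lambda>\<omega>. (X \<omega>, Z \<omega>)))"
      by (simp add: G_def comp_def)
    also have "\<dots> = distr (distr M (borel \<Otimes>\<^sub>M borel) (\<lambda>\<omega>. (X \<omega>, Z \<omega>))) N G"
      by (rule distr_distr[symmetric]) (use Gm in \<open>auto cong: measurable_cong_sets simp: sN\<close>)
    also have "\<dots> = distr (PX \<Otimes>\<^sub>M density lborel \<phi>) N G"
      unfolding XZ_indep PZ PX_def ..
    finally show ?thesis .
  qed
  have hm[measurable]: "(\<lambda>(x,y). ennreal (\<phi> (y - F x))) \<in> borel_measurable N"
    using sN by (simp cong: measurable_cong_sets) measurable
  have eq2: "distr (PX \<Otimes>\<^sub>M density lborel \<phi>) N G = density N (\<lambda>(x,y). ennreal (\<phi> (y - F x)))"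
  proof (rule measure_eqI)
    show "sets (distr (PX \<Otimes>\<^sub>M density lborel \<phi>) N G) = sets (density N (\<lambda>(x,y). ennreal (\<phi> (y - F x))))"
      by simp
  next
    fix A assume "A \<in> sets (distr (PX \<Otimes>\<^sub>M density lborel \<phi>) N G)"
    then have A: "A \<in> sets (borel \<Otimes>\<^sub>M borel)" using sN by simp
    have Am[measurable]: "indicator A \<in> borel_measurable (borel \<Otimes>\<^sub>M borel)"
      using A by simp
    have inner: "(\<integral>\<^sup>+ z. indicator A (x, F x + z) \<partial>density lborel \<phi>) =
        (\<integral>\<^sup>+ y. ennreal (\<phi> (y - F x)) * indicator A (x, y) \<partial>lborel)" for x
    proof -
      have "(\<integral>\<^sup>+ z. indicator A (x, F x + z) \<partial>density lborel \<phi>) =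
          (\<integral>\<^sup>+ z. ennreal (\<phi> z) * indicator A (x, F x + z) \<partial>lborel)"
        by (subst nn_integral_density) auto
      also have "\<dots> = (\<integral>\<^sup>+ z. ennreal (\<phi> ((F x + z) - F x)) * indicator A (x, F x + z) \<partial>lborel)"
        by simp
      also have "\<dots> = (\<integral>\<^sup>+ y. ennreal (\<phi> (y - F x)) * indicator A (x, y) \<partial>distr lborel borel ((+) (F x)))"
        by (subst nn_integral_distr) auto
      also have "\<dots> = (\<integral>\<^sup>+ y. ennreal (\<phi> (y - F x)) * indicator A (x, y) \<partial>lborel)"
        by (simp add: lborel_distr_plus)
      finally show ?thesis .
    qed
    have "emeasure (distr (PX \<Otimes>\<^sub>M density lborel \<phi>) N G) A =
        emeasure (PX \<Otimes>\<^sub>M density lborel \<phi>) (G -` A \<inter> space (PX \<Otimes>\<^sub>M density lborel \<phi>))"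
      using A sN by (subst emeasure_distr[OF Gm2]) auto
    also have "\<dots> = (\<integral>\<^sup>+ w. indicator A (G w) \<partial>(PX \<Otimes>\<^sub>M density lborel \<phi>))"
    proof -
      have S: "G -` A \<inter> space (PX \<Otimes>\<^sub>M density lborel \<phi>) \<in> sets (PX \<Otimes>\<^sub>M density lborel \<phi>)"
        by (rule measurable_sets[OF Gm2]) (simp add: sN A)
      have "emeasure (PX \<Otimes>\<^sub>M density lborel \<phi>) (G -` A \<inter> space (PX \<Otimes>\<^sub>M density lborel \<phi>))
         = (\<integral>\<^sup>+ w. indicator (G -` A \<inter> space (PX \<Otimes>\<^sub>M density lborel \<phi>)) w \<partial>(PX \<Otimes>\<^sub>M density lborel \<phi>))"
        using nn_integral_indicator[OF S] by simp
      also have "\<dots> = (\<integral>\<^sup>+ w. indicator A (G w) \<partial>(PX \<Otimes>\<^sub>M density lborel \<phi>))"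
        by (rule nn_integral_cong) (auto simp: indicator_def)
      finally show ?thesis .
    qed
    also have "\<dots> = (\<integral>\<^sup>+ x. \<integral>\<^sup>+ z. indicator A (G (x, z)) \<partial>density lborel \<phi> \<partial>PX)"
      by (rule PZ.nn_integral_fst[symmetric]) (use Gm in \<open>simp cong: measurable_cong_sets add: PX_def\<close>)
    also have "\<dots> = (\<integral>\<^sup>+ x. \<integral>\<^sup>+ y. ennreal (\<phi> (y - F x)) * indicator A (x, y) \<partial>lborel \<partial>PX)"
      by (simp add: G_def inner)
    also have "\<dots> = (\<integral>\<^sup>+ w. (\<lambda>(x,y). ennreal (\<phi> (y - F x))) w * indicator A w \<partial>N)"
      unfolding N_def
      by (subst lborel.nn_integral_fst[symmetric]) (auto simp: PX_def split_beta' cong: measurable_cong_sets)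
    also have "\<dots> = emeasure (density N (\<lambda>(x,y). ennreal (\<phi> (y - F x)))) A"
      using A sN by (subst emeasure_density) auto
    finally show "emeasure (distr (PX \<Otimes>\<^sub>M density lborel \<phi>) N G) A = emeasure (density N (\<lambda>(x,y). ennreal (\<phi> (y - F x)))) A" .
  qed
  show ?thesis
    unfolding distributed_def N_def[symmetric] PX_def[symmetric]
    using eq1 eq2 hm sN by (auto cong: measurable_cong_sets)
qed


lemma gauss_sq_int:
  fixes t :: real and i :: "'m::finite"
  assumes t: "t > 0"
  shows "integrable lborel (\<lambda>z::real^'m. iso_gauss_density t z * (z $ i)^2)"
proof -
  define fb where "fb b s = normal_density 0 (sqrt t) s * (if b = axis i (1::real) then s^2 else 1)" for b :: "real^'m" and s
  have fbnn: "0 \<le> fb b s" for b s unfolding fb_def by simp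
  have fbm[measurable]: "fb b \<in> borel_measurable borel" for b unfolding fb_def by measurable
  have fbi: "integrable lborel (fb b)" for b
  proof (cases "b = axis i 1")
    case True
    have "integrable lborel (\<lambda>x. normal_density 0 (sqrt t) x * (x - 0)^2)"
      using assms by (intro integrable_normal_moment) simp
    then show ?thesis using True assms unfolding fb_def by simp
  next
    case False then show ?thesis using assms unfolding fb_def by (simp add: integrable_normal_density)
  qed
  have bas: "(Basis :: (real^'m) set) = (\<lambda>j. axis j 1) ` UNIV"
    by (auto simp: Basis_vec_def)
  have inj: "inj (\<lambda>j::'m. axis j (1::real))"
    by (auto simp: inj_def axis_eq_axis)
  have prodeq: "(\<Prod>b\<in>Basis. fb b (z \<bullet> b)) = iso_gauss_density t z * (z $ i)^2" for z :: "real^'m"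
  proof -
    have "(\<Prod>b\<in>Basis. fb b (z \<bullet> b)) = (\<Prod>j\<in>UNIV. fb (axis j 1) (z \<bullet> axis j 1))"
      unfolding bas by (subst prod.reindex[OF inj]) (simp add: comp_def)
    also have "\<dots> = (\<Prod>j\<in>UNIV. normal_density 0 (sqrt t) (z $ j) * (if j = i then (z $ i)^2 else 1))"
      by (intro prod.cong refl) (auto simp: fb_def inner_axis axis_eq_axis)
    also have "\<dots> = iso_gauss_density t z * (z $ i)^2"
      by (simp add: prod.distrib iso_gauss_density_def prod.delta)
    finally show ?thesis .
  qed
  have "(\<integral>\<^sup>+ z. ennreal (iso_gauss_density t z * (z $ i)^2) \<partial>(lborel :: (real^'m) measure)) =
      (\<integral>\<^sup>+ z. (\<Prod>b\<in>Basis. ennreal (fb b (z \<bullet> b))) \<partial>lborel)"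
    by (intro nn_integral_cong) (simp add: prodeq[symmetric] prod_ennreal fbnn)
  also have "\<dots> = (\<Prod>b\<in>(Basis :: (real^'m) set). (\<integral>\<^sup>+x. ennreal (fb b x) \<partial>lborel))"
    by (rule nn_integral_lborel_prod) auto
  also have "\<dots> = (\<Prod>b\<in>(Basis :: (real^'m) set). ennreal (\<integral>x. fb b x \<partial>lborel))"
    by (intro prod.cong refl nn_integral_eq_integral fbi) (simp add: fbnn)
  also have "\<dots> = ennreal (\<Prod>b\<in>(Basis :: (real^'m) set). (\<integral>x. fb b x \<partial>lborel))"
    by (rule prod_ennreal) (simp add: fbnn)
  finally have fin: "(\<integral>\<^sup>+ z. ennreal (iso_gauss_density t z * (z $ i)^2) \<partial>(lborel :: (real^'m) measure)) < \<infinity>"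
    by simp
  have m: "(\<lambda>z::real^'m. iso_gauss_density t z * (z $ i)^2) \<in> borel_measurable lborel"
    unfolding iso_gauss_density_def by measurable
  have nn: "0 \<le> iso_gauss_density t z" for z :: "real^'m"
    unfolding iso_gauss_density_def by (simp add: prod_nonneg)
  show ?thesis
    using fin m nn by (subst integrable_iff_bounded) simp
qed

lemma ln_gauss:
  fixes t :: real
  assumes t: "t > 0"
  shows "ln (iso_gauss_density t (z::real^'m)) =
     (\<Sum>j\<in>UNIV. (- ((z $ j)^2)) / (2 * t) - ln (sqrt (2 * pi * t)))"
proof -
  have pos: "0 < normal_density 0 (sqrt t) x" for x using t by (simp add: normal_density_pos)
  have "ln (iso_gauss_density t z) = (\<Sum>j\<in>UNIV. ln (normal_density 0 (sqrt t) (z $ j)))"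
    unfolding iso_gauss_density_def by (intro ln_prod) (simp_all add: pos[THEN less_imp_neq, THEN not_sym])
  also have "\<dots> = (\<Sum>j\<in>UNIV. (- ((z $ j)^2)) / (2 * t) - ln (sqrt (2 * pi * t)))"
    using t by (intro sum.cong refl) (simp add: normal_density_def ln_mult ln_div)
  finally show ?thesis .
qed


theorem proposition4:
  fixes M :: "'a measure"
    and X :: "'a \<Rightarrow> real^'n"
    and Z :: "'a \<Rightarrow> real^'m"
    and S :: "'b measure"
    and g :: "real^'n \<Rightarrow> 'b"
    and f :: "real^'d \<Rightarrow> real^'n \<Rightarrow> real^'m"
    and p :: "real^'d \<Rightarrow> real^'m \<Rightarrow> real"
    and q :: "real^'d \<Rightarrow> 'b \<Rightarrow> real^'m \<Rightarrow> real"
    and t \<beta> :: real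
    and \<eta> :: "real^'d"
  defines "T \<equiv> (\<lambda>\<omega>. g (X \<omega>))"
    and "Y \<equiv> (\<lambda>\<eta>' \<omega>. f \<eta>' (X \<omega>) + Z \<omega>)"
    and "L \<equiv> (\<lambda>\<eta>'. prob_space.mutual_information M (exp 1) S borel (\<lambda>\<omega>. g (X \<omega>))
                       (\<lambda>\<omega>. f \<eta>' (X \<omega>) + Z \<omega>)
                   - \<beta> * prob_space.mutual_information M (exp 1) borel borel X
                       (\<lambda>\<omega>. f \<eta>' (X \<omega>) + Z \<omega>))"
  assumes M: "prob_space M"
    and t_pos: "t > 0"
    and beta_nonneg: "\<beta> \<ge> 0"
    (* X random vector, Z_t ~ N(0, t I_m) independent of X, T = g(X) *)
    and X_rv: "X \<in> borel_measurable M"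
    and Z_gauss: "distributed M lborel Z (\<lambda>z. ennreal (iso_gauss_density t z))"
    and XZ_indep: "distr M (borel \<Otimes>\<^sub>M borel) (\<lambda>\<omega>. (X \<omega>, Z \<omega>)) = distr M borel X \<Otimes>\<^sub>M distr M borel Z"
    and g_meas: "g \<in> measurable borel S"
    (* f_eta deterministic, measurable in x, differentiable in eta *)
    and f_meas: "\<And>\<eta>'. f \<eta>' \<in> borel_measurable borel"
    and f_diff: "\<And>\<eta>' x. (\<lambda>\<theta>. f \<theta> x) differentiable (at \<eta>')"
    (* p(eta,.) is the density of Y_t, q(eta,tau,.) the conditional density of Y_t given T = tau *)
    and p_density: "\<And>\<eta>'. distributed M lborel (Y \<eta>') (\<lambda>y. ennreal (p \<eta>' y))"
    and q_density: "\<And>\<eta>'. distributed M (distr M S T \<Otimes>\<^sub>M lborel) (\<lambda>\<omega>. (T \<omega>, Y \<eta>' \<omega>))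
                         (\<lambda>(\<tau>, y). ennreal (q \<eta>' \<tau> y))"
    (* regularity: positive, smooth versions of the densities *)
    and p_pos: "\<And>\<eta>' y. p \<eta>' y > 0"
    and q_pos: "\<And>\<eta>' \<tau> y. q \<eta>' \<tau> y > 0"
    and p_diff: "\<And>\<eta>' y. (\<lambda>(\<theta>, y'). p \<theta> y') differentiable (at (\<eta>', y))"
    and q_diff: "\<And>\<eta>' \<tau> y. (\<lambda>(\<theta>, y'). q \<theta> \<tau> y') differentiable (at (\<eta>', y))"
    (* regularity: finiteness of the information terms *)
    and lnp_int: "\<And>\<eta>'. integrable M (\<lambda>\<omega>. ln (p \<eta>' (Y \<eta>' \<omega>)))"
    and lnq_int: "\<And>\<eta>'. integrable M (\<lambda>\<omega>. ln (q \<eta>' (T \<omega>) (Y \<eta>' \<omega>)))"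
    (* regularity: exchange of differentiation in eta with expectation / integration *)
    and dp_int: "\<And>\<eta>' h. integrable lborel (\<lambda>y. frechet_derivative (\<lambda>\<theta>. p \<theta> y) (at \<eta>') h)"
    and dq_int: "\<And>\<eta>' h. integrable (distr M S T \<Otimes>\<^sub>M lborel)
                    (\<lambda>(\<tau>, y). frechet_derivative (\<lambda>\<theta>. q \<theta> \<tau> y) (at \<eta>') h)"
    and p_exchange: "\<And>\<eta>'. ((\<lambda>\<theta>. \<integral>y. p \<theta> y \<partial>lborel) has_derivative
                 (\<lambda>h. \<integral>y. frechet_derivative (\<lambda>\<theta>. p \<theta> y) (at \<eta>') h \<partial>lborel)) (at \<eta>')"
    and q_exchange: "\<And>\<eta>'. ((\<lambda>\<theta>. \<integral>(\<tau>, y). q \<theta> \<tau> y \<partial>(distr M S T \<Otimes>\<^sub>M lborel)) has_derivative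
                 (\<lambda>h. \<integral>(\<tau>, y). frechet_derivative (\<lambda>\<theta>. q \<theta> \<tau> y) (at \<eta>') h
                        \<partial>(distr M S T \<Otimes>\<^sub>M lborel))) (at \<eta>')"
    and dlnp_int: "\<And>\<eta>' h. integrable M
                 (\<lambda>\<omega>. frechet_derivative (\<lambda>\<theta>. ln (p \<theta> (Y \<theta> \<omega>))) (at \<eta>') h)"
    and dlnq_int: "\<And>\<eta>' h. integrable M
                 (\<lambda>\<omega>. frechet_derivative (\<lambda>\<theta>. ln (q \<theta> (T \<omega>) (Y \<theta> \<omega>))) (at \<eta>') h)"
    and lnp_exchange: "\<And>\<eta>'. ((\<lambda>\<theta>. \<integral>\<omega>. ln (p \<theta> (Y \<theta> \<omega>)) \<partial>M) has_derivative
                 (\<lambda>h. \<integral>\<omega>. frechet_derivative (\<lambda>\<theta>. ln (p \<theta> (Y \<theta> \<omega>))) (at \<eta>') h \<partial>M)) (at \<eta>')"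
    and lnq_exchange: "\<And>\<eta>'. ((\<lambda>\<theta>. \<integral>\<omega>. ln (q \<theta> (T \<omega>) (Y \<theta> \<omega>)) \<partial>M) has_derivative
                 (\<lambda>h. \<integral>\<omega>. frechet_derivative (\<lambda>\<theta>. ln (q \<theta> (T \<omega>) (Y \<theta> \<omega>))) (at \<eta>') h \<partial>M)) (at \<eta>')"
  shows "(L has_derivative
           (\<lambda>h. (\<integral>\<omega>. transpose (jacobian (\<lambda>\<theta>. f \<theta> (X \<omega>)) (at \<eta>))
                    *v (score (q \<eta> (T \<omega>)) (Y \<eta> \<omega>) + (\<beta> - 1) *\<^sub>R score (p \<eta>) (Y \<eta> \<omega>)) \<partial>M) \<bullet> h))
         (at \<eta>)"
proof -
  interpret prob_space M by (rule M)
  define \<phi> :: "real^'m \<Rightarrow> real" where "\<phi> = iso_gauss_density t"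
  have phipos: "\<phi> z > 0" for z :: "real^'m"
    unfolding \<phi>_def iso_gauss_density_def using t_pos by (intro prod_pos) (simp add: normal_density_pos)
  have Ym[measurable]: "Y \<theta> \<in> borel_measurable M" for \<theta>
    using distributed_measurable[OF p_density[of \<theta>]] by simp
  have Tm[measurable]: "T \<in> measurable M S"
    unfolding T_def using g_meas X_rv by measurable
  have Zm[measurable]: "Z \<in> borel_measurable M"
    using distributed_measurable[OF Z_gauss] by simp
  define Eq where "Eq \<theta> = (\<integral>\<omega>. ln (q \<theta> (T \<omega>) (Y \<theta> \<omega>)) \<partial>M)" for \<theta>
  define Ep where "Ep \<theta> = (\<integral>\<omega>. ln (p \<theta> (Y \<theta> \<omega>)) \<partial>M)" for \<theta>
  define C where "C = (\<integral>\<omega>. ln (\<phi> (Z \<omega>)) \<partial>M)"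
  have MIT: "mutual_information (exp 1) S borel T (Y \<theta>) = Eq \<theta> - Ep \<theta>" for \<theta>
    unfolding Eq_def Ep_def
    by (rule MI_eq[OF M Tm p_density p_pos q_density q_pos lnq_int lnp_int])
  have lnphi_int: "integrable M (\<lambda>\<omega>. ln (\<phi> (Z \<omega>)))"
  proof -
    have sq: "integrable M (\<lambda>\<omega>. (Z \<omega> $ j)^2)" for j
    proof -
      have "integrable lborel (\<lambda>z. iso_gauss_density t z * (z $ j)^2)"
        by (rule gauss_sq_int[OF t_pos])
      then show ?thesis
        using distributed_integrable[OF Z_gauss, of "\<lambda>z. (z $ j)^2"]
        by (simp add: iso_gauss_density_def prod_nonneg)
    qed
    have "integrable M (\<lambda>\<omega>. \<Sum>j\<in>UNIV. (- ((Z \<omega> $ j)^2)) / (2 * t) - ln (sqrt (2 * pi * t)))"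
      by (rule Bochner_Integration.integrable_sum, rule Bochner_Integration.integrable_diff, rule Bochner_Integration.integrable_divide, rule Bochner_Integration.integrable_minus, rule sq) simp
    then show ?thesis
      unfolding \<phi>_def ln_gauss[OF t_pos] .
  qed
  have MIX: "mutual_information (exp 1) borel borel X (Y \<theta>) = C - Ep \<theta>" for \<theta>
  proof -
    have jd: "distributed M (distr M borel X \<Otimes>\<^sub>M lborel) (\<lambda>\<omega>. (X \<omega>, Y \<theta> \<omega>))
           (\<lambda>(x,y). ennreal (\<phi> (y - f \<theta> x)))"
      unfolding Y_def \<phi>_def
      by (rule joint_XY[OF M X_rv Z_gauss _ XZ_indep f_meas])
         (simp add: iso_gauss_density_def prod_nonneg)
    have eqZ: "(\<lambda>\<omega>. ln (\<phi> (Y \<theta> \<omega> - f \<theta> (X \<omega>)))) = (\<lambda>\<omega>. ln (\<phi> (Z \<omega>)))"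
      by (simp add: Y_def)
    have "mutual_information (exp 1) borel borel X (Y \<theta>) =
        (\<integral>\<omega>. ln (\<phi> (Y \<theta> \<omega> - f \<theta> (X \<omega>))) \<partial>M) - (\<integral>\<omega>. ln (p \<theta> (Y \<theta> \<omega>)) \<partial>M)"
      by (rule MI_eq[OF M X_rv p_density p_pos jd phipos _ lnp_int]) (simp add: eqZ lnphi_int)
    then show ?thesis unfolding eqZ C_def Ep_def .
  qed
  have Leq: "L = (\<lambda>\<theta>. (Eq \<theta> - Ep \<theta>) - \<beta> * (C - Ep \<theta>))"
    using MIT MIX by (simp add: L_def T_def Y_def fun_eq_iff)
  define DQ where "DQ h = (\<integral>\<omega>. frechet_derivative (\<lambda>\<theta>. ln (q \<theta> (T \<omega>) (Y \<theta> \<omega>))) (at \<eta>) h \<partial>M)" for h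
  define DP where "DP h = (\<integral>\<omega>. frechet_derivative (\<lambda>\<theta>. ln (p \<theta> (Y \<theta> \<omega>))) (at \<eta>) h \<partial>M)" for h
  have Dq: "(Eq has_derivative DQ) (at \<eta>)"
    using lnq_exchange[of \<eta>] unfolding Eq_def DQ_def by (simp add: fun_eq_iff)
  have Dp: "(Ep has_derivative DP) (at \<eta>)"
    using lnp_exchange[of \<eta>] unfolding Ep_def DP_def by (simp add: fun_eq_iff)
  have DL: "((\<lambda>\<theta>. (Eq \<theta> - Ep \<theta>) - \<beta> * (C - Ep \<theta>)) has_derivative
      (\<lambda>h. (DQ h - DP h) - \<beta> * (0 - DP h))) (at \<eta>)"
    by (intro has_derivative_diff has_derivative_mult_right Dq Dp has_derivative_const)
  define J where "J \<omega> = frechet_derivative (\<lambda>\<theta>. f \<theta> (X \<omega>)) (at \<eta>)" for \<omega>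
  define Bq where "Bq \<omega> h = frechet_derivative (\<lambda>\<theta>. q \<theta> (T \<omega>) (Y \<eta> \<omega>)) (at \<eta>) h / q \<eta> (T \<omega>) (Y \<eta> \<omega>)" for \<omega> h
  define Bp where "Bp \<omega> h = frechet_derivative (\<lambda>\<theta>. p \<theta> (Y \<eta> \<omega>)) (at \<eta>) h / p \<eta> (Y \<eta> \<omega>)" for \<omega> h
  define V where "V \<omega> = transpose (jacobian (\<lambda>\<theta>. f \<theta> (X \<omega>)) (at \<eta>))
                    *v (score (q \<eta> (T \<omega>)) (Y \<eta> \<omega>) + (\<beta> - 1) *\<^sub>R score (p \<eta>) (Y \<eta> \<omega>))" for \<omega>
  have pointq: "frechet_derivative (\<lambda>\<theta>. ln (q \<theta> (T \<omega>) (Y \<theta> \<omega>))) (at \<eta>) h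
       = Bq \<omega> h + score (q \<eta> (T \<omega>)) (Y \<eta> \<omega>) \<bullet> J \<omega> h" for \<omega> h
  proof -
    have Yeq: "Y \<theta> \<omega> = f \<theta> (X \<omega>) + Z \<omega>" for \<theta> by (simp add: Y_def)
    note c = chain_ln[of "\<lambda>\<theta> y. q \<theta> (T \<omega>) y" \<eta> "\<lambda>\<theta>. f \<theta> (X \<omega>)" "Z \<omega>", OF q_diff q_pos f_diff]
    show ?thesis
      unfolding Yeq Bq_def J_def score_def using c
      by (simp add: grad_inner)
  qed
  have pointp: "frechet_derivative (\<lambda>\<theta>. ln (p \<theta> (Y \<theta> \<omega>))) (at \<eta>) h
       = Bp \<omega> h + score (p \<eta>) (Y \<eta> \<omega>) \<bullet> J \<omega> h" for \<omega> h
  proof -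
    have Yeq: "Y \<theta> \<omega> = f \<theta> (X \<omega>) + Z \<omega>" for \<theta> by (simp add: Y_def)
    note c = chain_ln[of "\<lambda>\<theta> y. p \<theta> y" \<eta> "\<lambda>\<theta>. f \<theta> (X \<omega>)" "Z \<omega>", OF p_diff p_pos f_diff]
    show ?thesis
      unfolding Yeq Bp_def J_def score_def using c
      by (simp add: grad_inner)
  qed
  have Vh: "V \<omega> \<bullet> h = (frechet_derivative (\<lambda>\<theta>. ln (q \<theta> (T \<omega>) (Y \<theta> \<omega>))) (at \<eta>) h - Bq \<omega> h)
      + (\<beta> - 1) * (frechet_derivative (\<lambda>\<theta>. ln (p \<theta> (Y \<theta> \<omega>))) (at \<eta>) h - Bp \<omega> h)" for \<omega> h
    unfolding V_def transpose_inner jac_apply[OF f_diff] pointq pointp J_def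
    by (simp add: inner_add_left)
  have zq: "integrable M (\<lambda>\<omega>. Bq \<omega> h) \<and> (\<integral>\<omega>. Bq \<omega> h \<partial>M) = 0" for h
  proof -
    have dist: "distributed M (distr M S T \<Otimes>\<^sub>M lborel) (\<lambda>\<omega>. (T \<omega>, Y \<theta> \<omega>))
        (\<lambda>x. ennreal (q \<theta> (fst x) (snd x)))" for \<theta>
      using q_density[of \<theta>] by (simp add: split_beta')
    have dint: "integrable (distr M S T \<Otimes>\<^sub>M lborel)
        (\<lambda>x. frechet_derivative (\<lambda>\<theta>. q \<theta> (fst x) (snd x)) (at \<eta>) h)"
      using dq_int[of \<eta> h] by (simp add: split_beta')
    have exch: "((\<lambda>\<theta>. \<integral>x. q \<theta> (fst x) (snd x) \<partial>(distr M S T \<Otimes>\<^sub>M lborel)) has_derivative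
        (\<lambda>h. \<integral>x. frechet_derivative (\<lambda>\<theta>. q \<theta> (fst x) (snd x)) (at \<eta>) h \<partial>(distr M S T \<Otimes>\<^sub>M lborel))) (at \<eta>)"
      using q_exchange[of \<eta>] by (simp add: split_beta')
    note s = score_zero[where P = "\<lambda>\<theta> x. q \<theta> (fst x) (snd x)" and W = "\<lambda>\<theta> \<omega>. (T \<omega>, Y \<theta> \<omega>)",
        OF M dist q_pos dint exch]
    then show ?thesis by (simp add: Bq_def)
  qed
  have zp: "integrable M (\<lambda>\<omega>. Bp \<omega> h) \<and> (\<integral>\<omega>. Bp \<omega> h \<partial>M) = 0" for h
  proof -
    note s = score_zero[where P = p and W = Y, OF M p_density p_pos dp_int p_exchange]
    then show ?thesis by (simp add: Bp_def)
  qed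
  have Vhint: "integrable M (\<lambda>\<omega>. V \<omega> \<bullet> h)" for h
    unfolding Vh using zq zp dlnq_int dlnp_int
    by (intro Bochner_Integration.integrable_add Bochner_Integration.integrable_diff Bochner_Integration.integrable_mult_right) auto
  have Vhval: "(\<integral>\<omega>. V \<omega> \<bullet> h \<partial>M) = DQ h + (\<beta> - 1) * DP h" for h
    unfolding Vh using zq[of h] zp[of h] dlnq_int[of \<eta> h] dlnp_int[of \<eta> h]
    by (simp add: DQ_def DP_def)
  have Vint: "integrable M V"
  proof -
    have "integrable M (\<lambda>\<omega>. \<Sum>b\<in>Basis. (V \<omega> \<bullet> b) *\<^sub>R b)"
      using Vhint by (intro Bochner_Integration.integrable_sum Bochner_Integration.integrable_scaleR_left) auto
    then show ?thesis by (simp add: euclidean_representation)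
  qed
  have DD: "(\<lambda>h. (DQ h - DP h) - \<beta> * (0 - DP h)) = (\<lambda>h. integral\<^sup>L M V \<bullet> h)"
  proof
    fix h
    have "integral\<^sup>L M V \<bullet> h = (\<integral>\<omega>. V \<omega> \<bullet> h \<partial>M)"
      using Vint by simp
    then show "(DQ h - DP h) - \<beta> * (0 - DP h) = integral\<^sup>L M V \<bullet> h"
      using Vhval[of h] by (simp add: algebra_simps)
  qed
  show ?thesis
    using DL unfolding Leq[symmetric] DD V_def .
qed

end
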